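(* Let $p>2$ be a prime and let $L$ be a Latin square of order $p$ with parity type $(k,m)$, and let $\mathfrak A(L)$ be its autotopy group. (i) If $k\neq0$ or $m\neq0$, then $p^2$ does not divide $|\mathfrak A(L)|$. (ii) If $k\neq0$ and $m\neq0$, then $p$ does not divide $|\mathfrak A(L)|$. (iii) If the parity type of $L$ is $(0,0)$ but $L$ is not isotopic to the Cayley table of $\mathbb Z_p$, then $p^2$ does not divide $|\mathfrak A(L)|$.
   Context: A Latin square of order $n$ is an $n\times n$ array with entries in $[n]$, each symbol once in each row and column. An isotopism $(\alpha,\beta,\gamma)\in S_n^3$ acts by $(\alpha,\beta,\gamma)(L)=L'$ with $L'(\alpha(r),\beta(c))=\gamma(L(r,c))$; two squares are isotopic if one is mapped to the other by an isotopism. The autotopy group $\mathfrak A(L)$ is $\{\Theta\in S_n^3:\Theta(L)=L\}$. Rows and columns are viewed as permutations: if symbol $i$ appears in the $j$th place of a row (column) $\sigma$, then $\sigma(i)=j$. The parity type of $L$ is $(k,m)$, $0\le k,m\le n/2$, if $k$ of its rows have one sign and the other $n-k$ rows the opposite sign, and $m$ of its columns have one sign and the other $n-m$ columns the opposite sign. *)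

theory Defs
  imports "HOL-Combinatorics.Permutations" "HOL-Computational_Algebra.Primes"
begin

definition latin_square :: "nat \<Rightarrow> (nat \<Rightarrow> nat \<Rightarrow> nat) \<Rightarrow> bool" where
  "latin_square n L \<longleftrightarrow>
     (\<forall>r<n. \<forall>c<n. L r c < n) \<and>
     (\<forall>r<n. inj_on (L r) {..<n}) \<and>
     (\<forall>c<n. inj_on (\<lambda>r. L r c) {..<n})"

definition row_perm :: "nat \<Rightarrow> (nat \<Rightarrow> nat \<Rightarrow> nat) \<Rightarrow> nat \<Rightarrow> nat \<Rightarrow> nat" where
  "row_perm n L r = (\<lambda>i. if i < n then (THE j. j < n \<and> L r j = i) else i)"

definition col_perm :: "nat \<Rightarrow> (nat \<Rightarrow> nat \<Rightarrow> nat) \<Rightarrow> nat \<Rightarrow> nat \<Rightarrow> nat" where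
  "col_perm n L c = (\<lambda>i. if i < n then (THE j. j < n \<and> L j c = i) else i)"

definition parity_type :: "nat \<Rightarrow> (nat \<Rightarrow> nat \<Rightarrow> nat) \<Rightarrow> nat \<times> nat" where
  "parity_type n L =
     (min (card {r. r < n \<and> sign (row_perm n L r) = 1})
          (card {r. r < n \<and> sign (row_perm n L r) = -1}),
      min (card {c. c < n \<and> sign (col_perm n L c) = 1})
          (card {c. c < n \<and> sign (col_perm n L c) = -1}))"

definition isotopism_maps :: "nat \<Rightarrow> (nat \<Rightarrow> nat) \<times> (nat \<Rightarrow> nat) \<times> (nat \<Rightarrow> nat)
     \<Rightarrow> (nat \<Rightarrow> nat \<Rightarrow> nat) \<Rightarrow> (nat \<Rightarrow> nat \<Rightarrow> nat) \<Rightarrow> bool" where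
  "isotopism_maps n \<Theta> L L' \<longleftrightarrow>
     (case \<Theta> of (\<alpha>, \<beta>, \<gamma>) \<Rightarrow>
        \<alpha> permutes {..<n} \<and> \<beta> permutes {..<n} \<and> \<gamma> permutes {..<n} \<and>
        (\<forall>r<n. \<forall>c<n. L' (\<alpha> r) (\<beta> c) = \<gamma> (L r c)))"

definition isotopic :: "nat \<Rightarrow> (nat \<Rightarrow> nat \<Rightarrow> nat) \<Rightarrow> (nat \<Rightarrow> nat \<Rightarrow> nat) \<Rightarrow> bool" where
  "isotopic n L L' \<longleftrightarrow> (\<exists>\<Theta>. isotopism_maps n \<Theta> L L')"

definition autotopy_group :: "nat \<Rightarrow> (nat \<Rightarrow> nat \<Rightarrow> nat)
     \<Rightarrow> ((nat \<Rightarrow> nat) \<times> (nat \<Rightarrow> nat) \<times> (nat \<Rightarrow> nat)) set" where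
  "autotopy_group n L = {\<Theta>. isotopism_maps n \<Theta> L L}"

definition cayley_Zn :: "nat \<Rightarrow> nat \<Rightarrow> nat \<Rightarrow> nat" where
  "cayley_Zn n = (\<lambda>r c. (r + c) mod n)"

end

theory Submission
  imports Defs "HOL-Algebra.Sylow" "HOL-Algebra.Multiplicative_Group"
begin


definition PG :: "nat \<Rightarrow> (nat \<Rightarrow> nat) monoid" where
  "PG n = \<lparr>carrier = {f. f permutes {..<n}}, mult = (\<circ>), one = id\<rparr>"

lemma PG_group: "group (PG n)"
  using permutes_inv permutes_inv_o(2)
  by (auto intro!: groupI simp add: PG_def permutes_compose permutes_id comp_assoc, blast)

lemma PG_order: "order (PG n) = fact n"
  by (simp add: order_def PG_def card_permutations)

definition AG :: "nat \<Rightarrow> (nat \<Rightarrow> nat \<Rightarrow> nat) \<Rightarrow> ((nat \<Rightarrow> nat) \<times> (nat \<Rightarrow> nat) \<times> (nat \<Rightarrow> nat)) monoid" where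
  "AG n L = \<lparr>carrier = autotopy_group n L,
     mult = (\<lambda>x y. (fst x \<circ> fst y, fst (snd x) \<circ> fst (snd y), snd (snd x) \<circ> snd (snd y))),
     one = (id, id, id)\<rparr>"

lemma aut_mem: "(a, b, c) \<in> autotopy_group n L \<longleftrightarrow>
   a permutes {..<n} \<and> b permutes {..<n} \<and> c permutes {..<n} \<and> (\<forall>r<n. \<forall>s<n. L (a r) (b s) = c (L r s))"
  by (simp add: autotopy_group_def isotopism_maps_def)

lemma aut_comp:
  assumes "(a, b, c) \<in> autotopy_group n L" "(a', b', c') \<in> autotopy_group n L"
  shows "(a \<circ> a', b \<circ> b', c \<circ> c') \<in> autotopy_group n L"
proof -
  have p: "a permutes {..<n}" "b permutes {..<n}" "c permutes {..<n}"
     "a' permutes {..<n}" "b' permutes {..<n}" "c' permutes {..<n}"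
    using assms by (auto simp: aut_mem)
  have "L (a (a' r)) (b (b' s)) = c (c' (L r s))" if "r < n" "s < n" for r s
  proof -
    have "a' r < n" "b' s < n" using p that by (meson lessThan_iff permutes_in_image)+
    then show ?thesis using assms that by (auto simp: aut_mem)
  qed
  then show ?thesis using p by (auto simp: aut_mem permutes_compose)
qed

lemma aut_inv:
  assumes "(a, b, c) \<in> autotopy_group n L"
  shows "(Hilbert_Choice.inv a, Hilbert_Choice.inv b, Hilbert_Choice.inv c) \<in> autotopy_group n L"
proof -
  have p: "a permutes {..<n}" "b permutes {..<n}" "c permutes {..<n}"
    using assms by (auto simp: aut_mem)
  have "L (Hilbert_Choice.inv a r) (Hilbert_Choice.inv b s) = Hilbert_Choice.inv c (L r s)" if "r < n" "s < n" for r s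
  proof -
    have i: "Hilbert_Choice.inv a r < n" "Hilbert_Choice.inv b s < n"
      using p that by (meson lessThan_iff permutes_in_image permutes_inv)+
    have "L (a (Hilbert_Choice.inv a r)) (b (Hilbert_Choice.inv b s)) = c (L (Hilbert_Choice.inv a r) (Hilbert_Choice.inv b s))"
      using assms i by (auto simp: aut_mem)
    then have "L r s = c (L (Hilbert_Choice.inv a r) (Hilbert_Choice.inv b s))"
      using p by (simp add: permutes_inverses(1))
    then show ?thesis using p by (simp add: permutes_inverses(2))
  qed
  then show ?thesis using p by (auto simp: aut_mem permutes_inv)
qed

lemma AG_group: "group (AG n L)"
proof (rule groupI)
  fix x y assume "x \<in> carrier (AG n L)" "y \<in> carrier (AG n L)"
  then show "x \<otimes>\<^bsub>AG n L\<^esub> y \<in> carrier (AG n L)"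
    using aut_comp[of "fst x" "fst (snd x)" "snd (snd x)" n L "fst y" "fst (snd y)" "snd (snd y)"]
    by (simp add: AG_def)
next
  show "\<one>\<^bsub>AG n L\<^esub> \<in> carrier (AG n L)"
    by (simp add: AG_def aut_mem permutes_id)
next
  fix x y z show "x \<otimes>\<^bsub>AG n L\<^esub> y \<otimes>\<^bsub>AG n L\<^esub> z = x \<otimes>\<^bsub>AG n L\<^esub> (y \<otimes>\<^bsub>AG n L\<^esub> z)"
    by (simp add: AG_def comp_assoc)
next
  fix x show "\<one>\<^bsub>AG n L\<^esub> \<otimes>\<^bsub>AG n L\<^esub> x = x" by (simp add: AG_def)
next
  fix x assume x: "x \<in> carrier (AG n L)"
  obtain a b c where abc: "x = (a, b, c)" by (cases x) auto
  have p: "a permutes {..<n}" "b permutes {..<n}" "c permutes {..<n}"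
    using x abc by (auto simp: aut_mem AG_def)
  show "\<exists>y\<in>carrier (AG n L). y \<otimes>\<^bsub>AG n L\<^esub> x = \<one>\<^bsub>AG n L\<^esub>"
    using aut_inv[of a b c n L] x abc p
    by (intro bexI[of _ "(Hilbert_Choice.inv a, Hilbert_Choice.inv b, Hilbert_Choice.inv c)"])
       (auto simp: AG_def permutes_inv_o(2))
qed

lemma AG_pow: "x [^]\<^bsub>AG n L\<^esub> (k::nat) = (fst x ^^ k, fst (snd x) ^^ k, snd (snd x) ^^ k)"
  by (induction k) (auto simp: AG_def comp_def funpow_swap1)



lemma sign_funpow:
  assumes "permutation f" shows "sign (f ^^ k) = sign f ^ k"
proof (induction k)
  case 0 then show ?case by simp
next
  case (Suc k)
  have "permutation (f ^^ k)"
    using assms by (induction k) (simp_all add: permutation_compose)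
  then have "sign (f \<circ> f ^^ k) = sign f * sign (f ^^ k)"
    using assms sign_compose by blast
  then show ?case using Suc by (metis funpow.simps(2) power_Suc)
qed

lemma sign_one_of_pow:
  assumes "f permutes {..<(n::nat)}" "f ^^ p = id" "odd p"
  shows "sign f = 1"
proof -
  have pf: "permutation f" using assms(1) permutation_permutes by blast
  have "sign f ^ p = 1" using sign_funpow[OF pf, of p] assms(2) by simp
  moreover have "sign f = 1 \<or> sign f = -1" by (simp add: sign_def)
  ultimately show ?thesis using assms(3) by auto
qed

lemma funpow_inj_b:
  assumes "b permutes S" shows "inj (b ^^ j)"
  using assms by (simp add: inj_fn permutes_inj)

lemma orbit_fixed:
  assumes bp: "b permutes {..<p}" and pr: "prime p" and bpow: "b ^^ p = id"
    and i: "i < j" "j < p" and eq: "(b ^^ i) x = (b ^^ j) x"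
  shows "b x = x"
proof -
  define d where "d = j - i"
  have d: "0 < d" "d < p" using i by (auto simp: d_def)
  have "(b ^^ j) x = (b ^^ i) ((b ^^ d) x)"
    using i unfolding d_def by (metis funpow_add comp_apply le_add_diff_inverse less_imp_le)
  then have dx: "(b ^^ d) x = x"
    using eq funpow_inj_b[OF bp, of i] by (metis injD)
  have mul: "(b ^^ (d * t)) x = x" for t
  proof (induction t)
    case 0 then show ?case by simp
  next
    case (Suc t)
    have "(b ^^ (d * Suc t)) x = (b ^^ d) ((b ^^ (d * t)) x)"
      by (simp add: mult_Suc_right funpow_add)
    then show ?case using Suc dx by simp
  qed
  have cop: "gcd d p = 1"
    using d pr by (metis coprime_commute gcd.commute prime_imp_coprime_nat coprime_iff_gcd_eq_1 nat_dvd_not_less)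
  obtain u v where uv: "d * u = p * v + gcd d p" using bezout_nat[of d p] d by auto
  have idv: "(id::nat\<Rightarrow>nat) ^^ v = id" by (induction v) auto
  have pv: "(b ^^ (p * v)) = id"
    by (metis funpow_mult bpow idv)
  have "(b ^^ (d * u)) x = b ((b ^^ (p * v)) x)"
    using uv cop by (simp add: funpow_add[symmetric] comp_def)
  then show ?thesis using mul pv by simp
qed

lemma orbit_cover:
  assumes bp: "b permutes {..<p}" and pr: "prime p" and bpow: "b ^^ p = id"
    and c0: "c0 < p" and mv: "b c0 \<noteq> c0"
  shows "inj_on (\<lambda>j. (b ^^ j) c0) {..<p}"
    and "(\<lambda>j. (b ^^ j) c0) ` {..<p} = {..<p}"
proof -
  show inj: "inj_on (\<lambda>j. (b ^^ j) c0) {..<p}"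
  proof (rule inj_onI)
    fix i j assume ij: "i \<in> {..<p}" "j \<in> {..<p}" "(b ^^ i) c0 = (b ^^ j) c0"
    show "i = j"
    proof (rule ccontr)
      assume "i \<noteq> j"
      then consider "i < j" | "j < i" by linarith
      then show False
        using orbit_fixed[OF bp pr bpow, of i j c0] orbit_fixed[OF bp pr bpow, of j i c0] ij mv by auto
    qed
  qed
  have sub: "(\<lambda>j. (b ^^ j) c0) ` {..<p} \<subseteq> {..<p}"
    using permutes_in_funpow_image[OF bp] c0 by auto
  have "card ((\<lambda>j. (b ^^ j) c0) ` {..<p}) = p"
    using card_image[OF inj] by simp
  then show "(\<lambda>j. (b ^^ j) c0) ` {..<p} = {..<p}"
    using sub by (simp add: card_subset_eq)
qed

lemma orbit_invariant:
  assumes bp: "b permutes {..<p}" and pr: "prime p" and bpow: "b ^^ p = id"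
    and c0: "c0 < p" and mv: "b c0 \<noteq> c0"
    and inv: "\<And>x. x < p \<Longrightarrow> f (b x) = f x"
  shows "x < p \<Longrightarrow> f x = f c0"
proof -
  have "f ((b ^^ j) c0) = f c0" for j
  proof (induction j)
    case 0 then show ?case by simp
  next
    case (Suc j)
    have "(b ^^ j) c0 < p" using permutes_in_funpow_image[OF bp] c0 by auto
    then show ?case using Suc inv by simp
  qed
  moreover assume "x < p"
  then obtain j where "x = (b ^^ j) c0"
    using orbit_cover(2)[OF assms(1-5)] by (metis imageE lessThan_iff)
  ultimately show ?thesis by simp
qed

lemma all_move:
  assumes bp: "b permutes {..<p}" and pr: "prime p" and bpow: "b ^^ p = id"
    and c0: "c0 < p" and mv: "b c0 \<noteq> c0" and x: "x < p"
  shows "b x \<noteq> x"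
proof
  assume bx: "b x = x"
  obtain j where j: "x = (b ^^ j) c0"
    using orbit_cover(2)[OF assms(1-5)] x by (metis imageE lessThan_iff)
  have "(b ^^ j) (b c0) = (b ^^ j) c0"
    using bx j by (simp add: funpow_swap1)
  then show False using mv funpow_inj_b[OF bp, of j] by (metis injD)
qed



lemma latin_row_surj:
  assumes "latin_square n L" "r < n" "i < n"
  shows "\<exists>j<n. L r j = i"
proof -
  have inj: "inj_on (L r) {..<n}" and sub: "L r ` {..<n} \<subseteq> {..<n}"
    using assms unfolding latin_square_def by auto
  have "card (L r ` {..<n}) = n" using card_image[OF inj] by simp
  then have "L r ` {..<n} = {..<n}" using sub by (simp add: card_subset_eq)
  then show ?thesis using assms(3) by (metis imageE lessThan_iff)
qed

lemma row_perm_char: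
  assumes "latin_square n L" "r < n"
  shows "\<And>j. j < n \<Longrightarrow> row_perm n L r (L r j) = j"
    and "\<And>i. i < n \<Longrightarrow> row_perm n L r i < n \<and> L r (row_perm n L r i) = i"
    and "\<And>i. i \<ge> n \<Longrightarrow> row_perm n L r i = i"
proof -
  have inj: "inj_on (L r) {..<n}" and rng: "\<And>j. j < n \<Longrightarrow> L r j < n"
    using assms unfolding latin_square_def by auto
  show "row_perm n L r i = i" if "i \<ge> n" for i using that by (simp add: row_perm_def)
  show P: "row_perm n L r i < n \<and> L r (row_perm n L r i) = i" if ilt: "i < n" for i
  proof -
    obtain j where j: "j < n" "L r j = i" using latin_row_surj[OF assms ilt] by auto
    have "(THE j'. j' < n \<and> L r j' = i) = j"
    proof (rule the_equality)
      show "j < n \<and> L r j = i" using j by simp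
      fix y assume y: "y < n \<and> L r y = i"
      show "y = j" using inj_onD[OF inj, of y j] y j by simp
    qed
    then show ?thesis using j ilt by (simp add: row_perm_def)
  qed
  show "row_perm n L r (L r j) = j" if jn: "j < n" for j
  proof -
    have q: "row_perm n L r (L r j) < n" "L r (row_perm n L r (L r j)) = L r j"
      using P[OF rng[OF jn]] by auto
    show ?thesis using inj_onD[OF inj q(2)] q(1) jn by simp
  qed
qed

lemma row_perm_permutes:
  assumes "latin_square n L" "r < n"
  shows "row_perm n L r permutes {..<n}"
proof (rule bij_imp_permutes)
  show "bij_betw (row_perm n L r) {..<n} {..<n}"
  proof (rule bij_betw_imageI)
    show "inj_on (row_perm n L r) {..<n}"
    proof (rule inj_onI)
      fix x y assume xy: "x \<in> {..<n}" "y \<in> {..<n}" "row_perm n L r x = row_perm n L r y"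
      have "L r (row_perm n L r x) = x" "L r (row_perm n L r y) = y"
        using row_perm_char(2)[OF assms] xy(1,2) by auto
      then show "x = y" using xy(3) by metis
    qed
    show "row_perm n L r ` {..<n} = {..<n}"
    proof
      show "row_perm n L r ` {..<n} \<subseteq> {..<n}"
        unfolding image_subset_iff lessThan_iff using row_perm_char(2)[OF assms] by blast
      show "{..<n} \<subseteq> row_perm n L r ` {..<n}"
      proof
        fix j assume j: "j \<in> {..<n}"
        have "L r j < n" using assms j unfolding latin_square_def by auto
        moreover have "row_perm n L r (L r j) = j" using row_perm_char(1)[OF assms, of j] j by simp
        ultimately show "j \<in> row_perm n L r ` {..<n}"
          by (intro image_eqI[of _ _ "L r j"]) auto
      qed
    qed
  qed
  show "x \<notin> {..<n} \<Longrightarrow> row_perm n L r x = x" for x using row_perm_char(3)[OF assms] by simp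
qed

definition transp :: "(nat \<Rightarrow> nat \<Rightarrow> nat) \<Rightarrow> nat \<Rightarrow> nat \<Rightarrow> nat" where
  "transp L = (\<lambda>x y. L y x)"

lemma col_perm_transp: "col_perm n L = row_perm n (transp L)"
  by (intro ext) (simp add: col_perm_def row_perm_def transp_def)

lemma row_perm_transp: "row_perm n L = col_perm n (transp L)"
  by (intro ext) (simp add: col_perm_def row_perm_def transp_def)

lemma latin_transp: "latin_square n L \<Longrightarrow> latin_square n (transp L)"
  by (simp add: latin_square_def transp_def)

lemma transp_transp[simp]: "transp (transp L) = L"
  by (simp add: transp_def)

lemma aut_transp: "(a, b, c) \<in> autotopy_group n L \<longleftrightarrow> (b, a, c) \<in> autotopy_group n (transp L)"
  by (auto simp: autotopy_group_def isotopism_maps_def transp_def)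

lemma parity_transp: "parity_type n (transp L) = prod.swap (parity_type n L)"
proof -
  have 1: "row_perm n (transp L) = col_perm n L" by (simp add: col_perm_transp)
  have 2: "col_perm n (transp L) = row_perm n L" using col_perm_transp[of n "transp L"] by simp
  show ?thesis unfolding parity_type_def 1 2 by simp
qed

lemma row_relation:
  assumes lat: "latin_square n L" and r: "r < n"
    and abc: "(a, b, c) \<in> autotopy_group n L"
  shows "row_perm n L (a r) \<circ> c = b \<circ> row_perm n L r"
proof
  have p: "a permutes {..<n}" "b permutes {..<n}" "c permutes {..<n}"
    and eq: "\<And>r s. r < n \<Longrightarrow> s < n \<Longrightarrow> L (a r) (b s) = c (L r s)"
    using abc by (auto simp: autotopy_group_def isotopism_maps_def)
  have ar: "a r < n" using p(1) r by (meson lessThan_iff permutes_in_image)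
  fix i
  show "(row_perm n L (a r) \<circ> c) i = (b \<circ> row_perm n L r) i"
  proof (cases "i < n")
    case True
    define j where "j = row_perm n L r i"
    have j: "j < n" "L r j = i" using row_perm_char(2)[OF lat r True] by (auto simp: j_def)
    have bj: "b j < n" using p(2) j by (meson lessThan_iff permutes_in_image)
    have "c i = L (a r) (b j)" using eq[OF r j(1)] j by simp
    then show ?thesis using row_perm_char(1)[OF lat ar bj] by (simp add: j_def)
  next
    case False
    have "c i = i" "b i = i" using p False by (meson lessThan_iff permutes_not_in)+
    then show ?thesis using False row_perm_char(3)[OF lat r] row_perm_char(3)[OF lat ar] by simp
  qed
qed

lemma row_sign_relation:
  assumes lat: "latin_square n L" and r: "r < n"
    and abc: "(a, b, c) \<in> autotopy_group n L"
    and sb: "sign b = 1" and sc: "sign c = 1"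
  shows "sign (row_perm n L (a r)) = sign (row_perm n L r)"
proof -
  have p: "a permutes {..<n}" "b permutes {..<n}" "c permutes {..<n}"
    using abc by (auto simp: autotopy_group_def isotopism_maps_def)
  have ar: "a r < n" using p(1) r by (meson lessThan_iff permutes_in_image)
  have pp: "permutation (row_perm n L (a r))" "permutation (row_perm n L r)"
     "permutation b" "permutation c"
    using row_perm_permutes[OF lat ar] row_perm_permutes[OF lat r] p
    by (meson finite_lessThan permutation_permutes)+
  have "sign (row_perm n L (a r) \<circ> c) = sign (b \<circ> row_perm n L r)"
    using row_relation[OF assms(1-3)] by simp
  then show ?thesis using pp sb sc by (simp add: sign_compose)
qed

lemma min_zero_if_const:
  assumes "\<And>x. x < n \<Longrightarrow> sign (g x) = (s::int)"
  shows "min (card {r. r < n \<and> sign (g r) = 1}) (card {r. r < n \<and> sign (g r) = -1}) = 0"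
proof (cases "s = 1")
  case True
  then have "{r. r < n \<and> sign (g r) = -1} = {}" using assms by auto
  then show ?thesis by (metis card.empty min_0R)
next
  case False
  then have "{r. r < n \<and> sign (g r) = 1} = {}" using assms by auto
  then show ?thesis by (metis card.empty min_0L)
qed

lemma rows_k0:
  assumes lat: "latin_square p L" and pr: "prime p" and odd: "odd p"
    and abc: "(a, b, c) \<in> autotopy_group p L"
    and pw: "a ^^ p = id" "b ^^ p = id" "c ^^ p = id"
    and mv: "a \<noteq> id"
  shows "fst (parity_type p L) = 0"
proof -
  have p: "a permutes {..<p}" "b permutes {..<p}" "c permutes {..<p}"
    using abc by (auto simp: autotopy_group_def isotopism_maps_def)
  have sb: "sign b = 1" and sc: "sign c = 1"
    using sign_one_of_pow[OF p(2) pw(2) odd] sign_one_of_pow[OF p(3) pw(3) odd] by auto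
  obtain c0 where c0: "a c0 \<noteq> c0" using mv by (auto simp: fun_eq_iff)
  then have c0p: "c0 < p" using p(1) by (meson lessThan_iff permutes_not_in)
  have p0: "0 < p" using c0p by simp
  have inv: "\<And>x. x < p \<Longrightarrow> sign (row_perm p L (a x)) = sign (row_perm p L x)"
    using row_sign_relation[OF lat _ abc sb sc] by blast
  define s where "s = sign (row_perm p L c0)"
  have "\<And>x. x < p \<Longrightarrow> sign (row_perm p L x) = s"
    unfolding s_def using orbit_invariant[OF p(1) pr pw(1) c0p c0, of "\<lambda>x. sign (row_perm p L x)"] inv by blast
  then have "min (card {r. r < p \<and> sign (row_perm p L r) = 1}) (card {r. r < p \<and> sign (row_perm p L r) = -1}) = 0"
    by (rule min_zero_if_const)
  then show ?thesis by (simp add: parity_type_def)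
qed

lemma cols_m0:
  assumes lat: "latin_square p L" and pr: "prime p" and odd: "odd p"
    and abc: "(a, b, c) \<in> autotopy_group p L"
    and pw: "a ^^ p = id" "b ^^ p = id" "c ^^ p = id"
    and mv: "b \<noteq> id"
  shows "snd (parity_type p L) = 0"
proof -
  have "fst (parity_type p (transp L)) = 0"
    using rows_k0[OF latin_transp[OF lat] pr odd _ pw(2,1,3) mv] abc aut_transp by blast
  then show ?thesis by (simp add: parity_transp)
qed



lemma pow_update: "x [^]\<^bsub>G\<lparr>carrier := H\<rparr>\<^esub> (n::nat) = x [^]\<^bsub>G\<^esub> n"
  by (induction n) simp_all

lemma cauchy_like:
  assumes G: "group G" "finite (carrier G)" and pr: "prime p" and d: "p dvd order G"
  shows "\<exists>x\<in>carrier G. x \<noteq> \<one>\<^bsub>G\<^esub> \<and> x [^]\<^bsub>G\<^esub> p = \<one>\<^bsub>G\<^esub>"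
proof -
  interpret G: group G by fact
  obtain m where "order G = p^1 * m" using d by auto
  then obtain H where H: "subgroup H G" "card H = p"
    using sylow_thm[OF pr G(1) _ G(2)] by (metis power_one_right)
  have gH: "group (G\<lparr>carrier := H\<rparr>)" using G.subgroup_imp_group H(1) by blast
  have "card H > 1" using H(2) pr prime_gt_1_nat by simp
  have "\<not> H \<subseteq> {\<one>\<^bsub>G\<^esub>}"
  proof
    assume "H \<subseteq> {\<one>\<^bsub>G\<^esub>}"
    then have "card H \<le> card {\<one>\<^bsub>G\<^esub>}" by (rule card_mono[rotated]) simp
    then show False using \<open>card H > 1\<close> by simp
  qed
  then obtain x where x: "x \<in> H" "x \<noteq> \<one>\<^bsub>G\<^esub>" by blast
  have "x [^]\<^bsub>G\<lparr>carrier := H\<rparr>\<^esub> order (G\<lparr>carrier := H\<rparr>) = \<one>\<^bsub>G\<lparr>carrier := H\<rparr>\<^esub>"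
    using group.pow_order_eq_1[OF gH] x by simp
  then have "x [^]\<^bsub>G\<^esub> p = \<one>\<^bsub>G\<^esub>" using H(2) by (simp add: order_def pow_update)
  moreover have "x \<in> carrier G" using x H(1) subgroup.subset by blast
  ultimately show ?thesis using x by blast
qed

lemma kernel_elem:
  assumes G: "group G" "finite (carrier G)" and pr: "prime p"
    and h: "group_hom G (PG n) h" and nd: "\<not> p^2 dvd fact n" and d: "p^2 dvd order G"
  shows "\<exists>x\<in>carrier G. h x = id \<and> x \<noteq> \<one>\<^bsub>G\<^esub> \<and> x [^]\<^bsub>G\<^esub> p = \<one>\<^bsub>G\<^esub>"
proof -
  interpret G: group G by fact
  interpret h: group_hom G "PG n" h by fact
  define I where "I = h ` carrier G"
  have sI: "subgroup I (PG n)" unfolding I_def by (rule h.img_is_subgroup)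
  have "card (rcosets\<^bsub>PG n\<^esub> I) * card I = fact n"
    using group.lagrange[OF PG_group sI] PG_order by simp
  then have Idvd: "card I dvd fact n" by (metis dvd_triv_right)
  define H' where "H' = (PG n)\<lparr>carrier := I\<rparr>"
  have gH': "group H'" unfolding H'_def using group.subgroup_imp_group[OF PG_group sI] .
  have hom': "group_hom G H' h"
  proof (rule group_hom.intro)
    show "group G" by fact
    show "group H'" by fact
    show "group_hom_axioms G H' h"
      unfolding group_hom_axioms_def hom_def H'_def I_def
      using h.hom_mult by auto
  qed
  define K where "K = kernel G H' h"
  have K: "K = {x \<in> carrier G. h x = id}" by (simp add: K_def kernel_def H'_def PG_def)
  have "G Mod K \<cong> H'"
    unfolding K_def by (rule group_hom.FactGroup_iso[OF hom']) (simp add: H'_def I_def)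
  then have "card (carrier (G Mod K)) = card I" using iso_same_card by (fastforce simp: H'_def)
  then have "card (rcosets\<^bsub>G\<^esub> K) = card I" by (simp add: FactGroup_def)
  moreover have sK: "subgroup K G" unfolding K_def by (rule group_hom.subgroup_kernel[OF hom'])
  ultimately have prod: "card I * card K = order G" using G.lagrange[OF sK] by simp
  have pK: "p dvd card K"
  proof (rule ccontr)
    assume "\<not> p dvd card K"
    then have "coprime p (card K)" using pr by (simp add: prime_imp_coprime_nat)
    then have "coprime (p^2) (card K)" by simp
    moreover have "p^2 dvd card I * card K" using d prod by simp
    ultimately have "p^2 dvd card I" using coprime_dvd_mult_left_iff by blast
    then show False using Idvd nd dvd_trans by blast
  qed
  have gK: "group (G\<lparr>carrier := K\<rparr>)" using G.subgroup_imp_group sK by blast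
  have fK: "finite K" using sK G(2) subgroup.subset finite_subset by blast
  obtain x where x: "x \<in> K" "x \<noteq> \<one>\<^bsub>G\<^esub>" "x [^]\<^bsub>G\<^esub> p = \<one>\<^bsub>G\<^esub>"
    using cauchy_like[OF gK _ pr] pK fK by (auto simp: order_def pow_update)
  then show ?thesis using K by auto
qed

lemma not_sq_dvd_fact:
  assumes "prime (p::nat)" shows "\<not> p^2 dvd fact p"
proof
  assume a: "p^2 dvd fact p"
  have p0: "p > 0" using assms prime_gt_0_nat by blast
  have "fact p = p * fact (p - 1)" using fact_reduce[OF p0, where 'a=nat] by simp
  then have "p * p dvd p * fact (p - 1)" using a by (simp add: power2_eq_square)
  then have "p dvd fact (p - 1)" using p0 by simp
  then have "p \<le> p - 1" using assms prime_dvd_fact_iff by blast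
  then show False using p0 by simp
qed

lemma AG_finite: "finite (carrier (AG n L))"
proof -
  have "carrier (AG n L) \<subseteq> {f. f permutes {..<n}} \<times> {f. f permutes {..<n}} \<times> {f. f permutes {..<n}}"
    by (auto simp: AG_def autotopy_group_def isotopism_maps_def)
  then show ?thesis by (rule finite_subset) (simp add: finite_permutations)
qed

lemma hom_fst: "group_hom (AG n L) (PG n) fst"
  unfolding group_hom_def group_hom_axioms_def hom_def
  by (intro conjI AG_group PG_group) (auto simp: AG_def PG_def autotopy_group_def isotopism_maps_def)

lemma hom_snd: "group_hom (AG n L) (PG n) (\<lambda>x. fst (snd x))"
  unfolding group_hom_def group_hom_axioms_def hom_def
  by (intro conjI AG_group PG_group) (auto simp: AG_def PG_def autotopy_group_def isotopism_maps_def)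



lemma funpow_rel:
  assumes aut: "(id, b, c) \<in> autotopy_group n L" and r: "r < n" and s: "s < n"
  shows "L r ((b ^^ j) s) = (c ^^ j) (L r s)"
proof (induction j)
  case 0 then show ?case by simp
next
  case (Suc j)
  have bp: "b permutes {..<n}" and eq: "\<And>r s. r < n \<Longrightarrow> s < n \<Longrightarrow> L r (b s) = c (L r s)"
    using aut by (auto simp: autotopy_group_def isotopism_maps_def)
  have "(b ^^ j) s < n" using permutes_in_funpow_image[OF bp, of s j] s by simp
  then have "L r (b ((b ^^ j) s)) = c (L r ((b ^^ j) s))" using eq r by blast
  then show ?case using Suc by simp
qed

lemma funpow_mod:
  assumes "f ^^ p = id" shows "f ^^ k = f ^^ (k mod p)"
proof -
  have idq: "(id::'a\<Rightarrow>'a) ^^ q = id" for q by (induction q) auto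
  have "f ^^ (p * (k div p)) = id" by (metis funpow_mult assms idq)
  moreover have "k = k mod p + p * (k div p)" by simp
  ultimately show ?thesis by (metis funpow_add comp_id)
qed

lemma trivial_c:
  assumes lat: "latin_square p L" and p0: "0 < p" and aut: "(id, id, c) \<in> autotopy_group p L"
  shows "c = id"
proof
  fix x
  have cp: "c permutes {..<p}" and eq: "\<And>r s. r < p \<Longrightarrow> s < p \<Longrightarrow> L r s = c (L r s)"
    using aut by (auto simp: autotopy_group_def isotopism_maps_def)
  show "c x = id x"
  proof (cases "x < p")
    case True
    then obtain s where "s < p" "L 0 s = x" using latin_row_surj[OF lat p0] by blast
    then show ?thesis using eq[OF p0] by force
  next
    case False then show ?thesis using cp by (simp add: permutes_not_in)
  qed
qed

lemma iso_cayley: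
  assumes lat: "latin_square p L" and pr: "prime p"
    and aut: "(id, b, c) \<in> autotopy_group p L" and bpw: "b ^^ p = id" and cpw: "c ^^ p = id"
    and bn: "b \<noteq> id"
  shows "isotopic p L (cayley_Zn p)"
proof -
  have bp: "b permutes {..<p}" and cp: "c permutes {..<p}"
    using aut by (auto simp: autotopy_group_def isotopism_maps_def)
  have p0: "0 < p" using pr prime_gt_0_nat by blast
  obtain c1 where c1: "b c1 \<noteq> c1" using bn by (auto simp: fun_eq_iff)
  then have c1p: "c1 < p" using bp by (meson lessThan_iff permutes_not_in)
  have b0: "b 0 \<noteq> 0" using all_move[OF bp pr bpw c1p c1 p0] .
  have Binj: "inj_on (\<lambda>j. (b ^^ j) 0) {..<p}" and Bimg: "(\<lambda>j. (b ^^ j) 0) ` {..<p} = {..<p}"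
    using orbit_cover[OF bp pr bpw p0 b0] by auto
  define s0 where "s0 = L 0 0"
  have rel: "\<And>r j. r < p \<Longrightarrow> L r ((b ^^ j) 0) = (c ^^ j) (L r 0)"
    using funpow_rel[OF aut _ p0] by blast
  have rowinj: "inj_on (L 0) {..<p}" and rng: "\<And>r s. r < p \<Longrightarrow> s < p \<Longrightarrow> L r s < p"
    and colinj: "inj_on (\<lambda>r. L r 0) {..<p}"
    using lat p0 unfolding latin_square_def by auto
  have bj: "\<And>j. (b ^^ j) 0 < p" using permutes_in_funpow_image[OF bp] p0 by simp
  have Cinj: "inj_on (\<lambda>j. (c ^^ j) s0) {..<p}"
  proof (rule inj_onI)
    fix i j assume ij: "i \<in> {..<p}" "j \<in> {..<p}" "(c ^^ i) s0 = (c ^^ j) s0"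
    then have "L 0 ((b ^^ i) 0) = L 0 ((b ^^ j) 0)" using rel[OF p0] by (simp add: s0_def)
    then have "(b ^^ i) 0 = (b ^^ j) 0" using inj_onD[OF rowinj] bj by simp
    then show "i = j" using inj_onD[OF Binj] ij by simp
  qed
  have Csub: "(\<lambda>j. (c ^^ j) s0) ` {..<p} \<subseteq> {..<p}"
  proof
    fix y assume "y \<in> (\<lambda>j. (c ^^ j) s0) ` {..<p}"
    then obtain j where "y = (c ^^ j) s0" by blast
    then have "y = L 0 ((b ^^ j) 0)" using rel[OF p0] by (simp add: s0_def)
    then show "y \<in> {..<p}" using rng[OF p0 bj] by simp
  qed
  have Cimg: "(\<lambda>j. (c ^^ j) s0) ` {..<p} = {..<p}"
    using Csub card_image[OF Cinj] by (simp add: card_subset_eq)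
  have colsub: "(\<lambda>r. L r 0) ` {..<p} \<subseteq> {..<p}" using rng p0 by auto
  have colimg: "(\<lambda>r. L r 0) ` {..<p} = {..<p}"
    using colsub card_image[OF colinj] by (simp add: card_subset_eq)
  define Bf where "Bf = (\<lambda>j. if j < p then (b ^^ j) 0 else j)"
  define Gf where "Gf = (\<lambda>j. if j < p then (c ^^ j) s0 else j)"
  define Cf where "Cf = (\<lambda>r. if r < p then L r 0 else r)"
  have Bfp: "Bf permutes {..<p}"
  proof (rule bij_imp_permutes)
    show "bij_betw Bf {..<p} {..<p}"
      using bij_betw_imageI[OF Binj Bimg] by (rule bij_betw_cong[THEN iffD1, rotated]) (simp add: Bf_def)
    show "x \<notin> {..<p} \<Longrightarrow> Bf x = x" for x by (simp add: Bf_def)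
  qed
  have Gfp: "Gf permutes {..<p}"
  proof (rule bij_imp_permutes)
    show "bij_betw Gf {..<p} {..<p}"
      using bij_betw_imageI[OF Cinj Cimg] by (rule bij_betw_cong[THEN iffD1, rotated]) (simp add: Gf_def)
    show "x \<notin> {..<p} \<Longrightarrow> Gf x = x" for x by (simp add: Gf_def)
  qed
  have Cfp: "Cf permutes {..<p}"
  proof (rule bij_imp_permutes)
    show "bij_betw Cf {..<p} {..<p}"
      using bij_betw_imageI[OF colinj colimg] by (rule bij_betw_cong[THEN iffD1, rotated]) (simp add: Cf_def)
    show "x \<notin> {..<p} \<Longrightarrow> Cf x = x" for x by (simp add: Cf_def)
  qed
  define al where "al = Hilbert_Choice.inv Gf \<circ> Cf"
  define be where "be = Hilbert_Choice.inv Bf"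
  define ga where "ga = Hilbert_Choice.inv Gf"
  have alp: "al permutes {..<p}" unfolding al_def using permutes_compose[OF Cfp permutes_inv[OF Gfp]] .
  have bep: "be permutes {..<p}" unfolding be_def using permutes_inv[OF Bfp] .
  have gap: "ga permutes {..<p}" unfolding ga_def using permutes_inv[OF Gfp] .
  have main: "cayley_Zn p (al r) (be s) = ga (L r s)" if r: "r < p" and s: "s < p" for r s
  proof -
    define j where "j = be s"
    have jp: "j < p" using bep s unfolding j_def by (meson lessThan_iff permutes_in_image)
    have "Bf j = s" unfolding j_def be_def using permutes_inverses(1)[OF Bfp] by simp
    then have bjs: "(b ^^ j) 0 = s" using jp by (simp add: Bf_def)
    define i where "i = ga (L r 0)"
    have Lr0: "L r 0 < p" using rng[OF r p0] .
    have ip: "i < p" using gap Lr0 unfolding i_def by (meson lessThan_iff permutes_in_image)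
    have "Gf i = L r 0" unfolding i_def ga_def using permutes_inverses(1)[OF Gfp] by simp
    then have cis: "(c ^^ i) s0 = L r 0" using ip by (simp add: Gf_def)
    have "L r s = (c ^^ j) (L r 0)" using rel[OF r, of j] bjs by simp
    also have "\<dots> = (c ^^ (j + i)) s0" using cis by (simp add: funpow_add)
    also have "\<dots> = (c ^^ ((i + j) mod p)) s0" using funpow_mod[OF cpw, of "j + i"] by (simp add: add.commute)
    also have "\<dots> = Gf ((i + j) mod p)" using p0 by (simp add: Gf_def)
    finally have "ga (L r s) = (i + j) mod p"
      unfolding ga_def using permutes_inverses(2)[OF Gfp] by simp
    moreover have "al r = i" using r by (simp add: al_def Cf_def i_def ga_def)
    ultimately show ?thesis by (simp add: cayley_Zn_def j_def)
  qed
  show ?thesis unfolding isotopic_def isotopism_maps_def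
    using alp bep gap main by (intro exI[of _ "(al, be, ga)"]) auto
qed

theorem corollary4p1:
  fixes p k m :: nat and L :: "nat \<Rightarrow> nat \<Rightarrow> nat"
  assumes "prime p" and "p > 2"
    and "latin_square p L"
    and "parity_type p L = (k, m)"
  shows "((k \<noteq> 0 \<or> m \<noteq> 0) \<longrightarrow> \<not> p^2 dvd card (autotopy_group p L))
       \<and> ((k \<noteq> 0 \<and> m \<noteq> 0) \<longrightarrow> \<not> p dvd card (autotopy_group p L))
       \<and> ((k = 0 \<and> m = 0 \<and> \<not> isotopic p L (cayley_Zn p))
            \<longrightarrow> \<not> p^2 dvd card (autotopy_group p L))"
proof -
  note pr = assms(1) and lat = assms(3) and pt = assms(4)
  have odd: "odd p" using prime_odd_nat assms(1,2) by blast
  have p0: "0 < p" using assms(2) by simp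
  define G where "G = AG p L"
  have gG: "group G" unfolding G_def by (rule AG_group)
  have fG: "finite (carrier G)" unfolding G_def by (rule AG_finite)
  have ordG: "order G = card (autotopy_group p L)" by (simp add: G_def AG_def order_def)
  have carG: "carrier G = autotopy_group p L" by (simp add: G_def AG_def)
  have oneG: "\<one>\<^bsub>G\<^esub> = (id, id, id)" by (simp add: G_def AG_def)
  have powG: "x [^]\<^bsub>G\<^esub> p = (fst x ^^ p, fst (snd x) ^^ p, snd (snd x) ^^ p)" for x
    unfolding G_def by (rule AG_pow)
  have P1: "k = 0 \<or> m = 0" if d: "p dvd card (autotopy_group p L)"
  proof -
    obtain x where x: "x \<in> carrier G" "x \<noteq> \<one>\<^bsub>G\<^esub>" "x [^]\<^bsub>G\<^esub> p = \<one>\<^bsub>G\<^esub>"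
      using cauchy_like[OF gG fG pr] d ordG by auto
    obtain a b c where abc: "x = (a, b, c)" by (cases x) auto
    have mem: "(a, b, c) \<in> autotopy_group p L" using x(1) abc carG by simp
    have pw: "a ^^ p = id" "b ^^ p = id" "c ^^ p = id" using x(3) abc powG oneG by auto
    show ?thesis
    proof (cases "a = id")
      case True
      have "b \<noteq> id"
      proof
        assume "b = id"
        then have "c = id" using trivial_c[OF lat p0] mem True by simp
        then show False using x(2) abc oneG True \<open>b = id\<close> by simp
      qed
      then have "snd (parity_type p L) = 0" using cols_m0[OF lat pr odd mem pw] by simp
      then show ?thesis using pt by simp
    next
      case False
      then have "fst (parity_type p L) = 0" using rows_k0[OF lat pr odd mem pw] by simp
      then show ?thesis using pt by simp
    qed
  qed
  have P2: "k = 0 \<and> m = 0 \<and> isotopic p L (cayley_Zn p)" if d: "p^2 dvd card (autotopy_group p L)"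
  proof -
    have hf: "group_hom G (PG p) fst" unfolding G_def by (rule hom_fst)
    have hs: "group_hom G (PG p) (\<lambda>x. fst (snd x))" unfolding G_def by (rule hom_snd)
    have d': "p^2 dvd order G" using d ordG by simp
    obtain x where x: "x \<in> carrier G" "fst x = id" "x \<noteq> \<one>\<^bsub>G\<^esub>" "x [^]\<^bsub>G\<^esub> p = \<one>\<^bsub>G\<^esub>"
      using kernel_elem[OF gG fG pr hf not_sq_dvd_fact[OF pr] d'] by blast
    obtain b c where abc: "x = (id, b, c)" using x(2) by (cases x) auto
    have mem: "(id, b, c) \<in> autotopy_group p L" using x(1) abc carG by simp
    have pw: "id ^^ p = id" "b ^^ p = id" "c ^^ p = id" using x(4) abc powG oneG by auto
    have bn: "b \<noteq> id"
    proof
      assume "b = id"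
      then have "c = id" using trivial_c[OF lat p0] mem by simp
      then show False using x(3) abc oneG \<open>b = id\<close> by simp
    qed
    have m0: "snd (parity_type p L) = 0" using cols_m0[OF lat pr odd mem pw bn] .
    have iso: "isotopic p L (cayley_Zn p)" using iso_cayley[OF lat pr mem pw(2,3) bn] .
    obtain y where y: "y \<in> carrier G" "fst (snd y) = id" "y \<noteq> \<one>\<^bsub>G\<^esub>" "y [^]\<^bsub>G\<^esub> p = \<one>\<^bsub>G\<^esub>"
      using kernel_elem[OF gG fG pr hs not_sq_dvd_fact[OF pr] d'] by blast
    obtain a c' where abc': "y = (a, id, c')" using y(2) by (cases y) auto
    have mem': "(a, id, c') \<in> autotopy_group p L" using y(1) abc' carG by simp
    have pw': "a ^^ p = id" "id ^^ p = id" "c' ^^ p = id" using y(4) abc' powG oneG by auto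
    have an: "a \<noteq> id"
    proof
      assume "a = id"
      then have "c' = id" using trivial_c[OF lat p0] mem' by simp
      then show False using y(3) abc' oneG \<open>a = id\<close> by simp
    qed
    have k0: "fst (parity_type p L) = 0" using rows_k0[OF lat pr odd mem' pw' an] .
    show ?thesis using k0 m0 iso pt by simp
  qed
  show ?thesis using P1 P2 by blast
qed


end
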